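(* There exist a finite grid graph $G=P_a\square P_b$ (Cartesian product of two paths) and pebble distributions $D, D'$ on $G$ with $D(v)\le D'(v)$ for every vertex $v$, such that the covering ratio of $D'$ exceeds the covering ratio of $D$ by more than $1$, while the covering ratio ceiling of $D'$ is strictly smaller than the covering ratio ceiling of $D$.
   Context: A pebble distribution on a graph $G$ is a function $D:V(G)\to\mathbb{N}$; its size is $|D|=\sum_v D(v)$. A pebbling move along an edge $vu$ with $D(v)\ge 2$ removes two pebbles from $v$ and adds one pebble to $u$. A vertex $v$ is reachable under $D$ if $D(v)\ge 1$ or there is a sequence of pebbling moves whose last move places a pebble on $v$. The covering ratio of $D$ is (number of vertices reachable under $D$)$/|D|$. The weight function of $D$ is $W_D(u)=\sum_{v\in V(G)} D(v)2^{-d(u,v)}$, where $d$ is graph distance. The excess weight is $\widehat W_D(u)=W_D(u)-1$ if $W_D(u)>1$ and $\widehat W_D(u)=W_D(u)$ if $W_D(u)\le 1$. The covering ratio ceiling of $D$ is $\left(\sum_{v}W_D(v)-\sum_v \widehat W_D(v)\right)/\sum_v D(v)$. *)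

theory Defs
  imports Complex_Main
begin

text \<open>A graph is given by a finite vertex set V and a symmetric adjacency relation E
  (E u v only for u, v in V). A pebble distribution is a function D :: 'a \<Rightarrow> nat,
  meant to vanish outside V.\<close>

definition dist_size :: "'a set \<Rightarrow> ('a \<Rightarrow> nat) \<Rightarrow> nat" where
  "dist_size V D = (\<Sum>v\<in>V. D v)"

definition gdist :: "('a \<Rightarrow> 'a \<Rightarrow> bool) \<Rightarrow> 'a \<Rightarrow> 'a \<Rightarrow> nat" where
  "gdist E u v = (LEAST n. (E ^^ n) u v)"

definition pebble_move :: "('a \<Rightarrow> 'a \<Rightarrow> bool) \<Rightarrow> ('a \<Rightarrow> nat) \<Rightarrow> 'a \<Rightarrow> 'a \<Rightarrow> ('a \<Rightarrow> nat) \<Rightarrow> bool" where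
  "pebble_move E D v u D' \<longleftrightarrow> E v u \<and> D v \<ge> 2 \<and> D' = (\<lambda>w. if w = v then D v - 2 else if w = u then D u + 1 else D w)"

definition pebble_step :: "('a \<Rightarrow> 'a \<Rightarrow> bool) \<Rightarrow> ('a \<Rightarrow> nat) \<Rightarrow> ('a \<Rightarrow> nat) \<Rightarrow> bool" where
  "pebble_step E D D' \<longleftrightarrow> (\<exists>v u. pebble_move E D v u D')"

definition reachable :: "('a \<Rightarrow> 'a \<Rightarrow> bool) \<Rightarrow> ('a \<Rightarrow> nat) \<Rightarrow> 'a \<Rightarrow> bool" where
  "reachable E D v \<longleftrightarrow> D v \<ge> 1 \<or>
     (\<exists>D1 D2 w. (pebble_step E)\<^sup>*\<^sup>* D D1 \<and> pebble_move E D1 w v D2)"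

definition covering_ratio :: "'a set \<Rightarrow> ('a \<Rightarrow> 'a \<Rightarrow> bool) \<Rightarrow> ('a \<Rightarrow> nat) \<Rightarrow> real" where
  "covering_ratio V E D = real (card {v\<in>V. reachable E D v}) / real (dist_size V D)"

definition weight :: "'a set \<Rightarrow> ('a \<Rightarrow> 'a \<Rightarrow> bool) \<Rightarrow> ('a \<Rightarrow> nat) \<Rightarrow> 'a \<Rightarrow> real" where
  "weight V E D u = (\<Sum>v\<in>V. real (D v) * (1/2) ^ gdist E u v)"

definition excess_weight :: "'a set \<Rightarrow> ('a \<Rightarrow> 'a \<Rightarrow> bool) \<Rightarrow> ('a \<Rightarrow> nat) \<Rightarrow> 'a \<Rightarrow> real" where
  "excess_weight V E D u = (if weight V E D u > 1 then weight V E D u - 1 else weight V E D u)"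

definition covering_ratio_ceiling :: "'a set \<Rightarrow> ('a \<Rightarrow> 'a \<Rightarrow> bool) \<Rightarrow> ('a \<Rightarrow> nat) \<Rightarrow> real" where
  "covering_ratio_ceiling V E D =
     ((\<Sum>v\<in>V. weight V E D v) - (\<Sum>v\<in>V. excess_weight V E D v)) / real (dist_size V D)"

definition grid_vertices :: "nat \<Rightarrow> nat \<Rightarrow> (nat \<times> nat) set" where
  "grid_vertices a b = {0..<a} \<times> {0..<b}"

definition grid_adj :: "nat \<Rightarrow> nat \<Rightarrow> nat \<times> nat \<Rightarrow> nat \<times> nat \<Rightarrow> bool" where
  "grid_adj a b x y \<longleftrightarrow> x \<in> grid_vertices a b \<and> y \<in> grid_vertices a b \<and>
     ((fst x = fst y \<and> (snd y = snd x + 1 \<or> snd x = snd y + 1)) \<or>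
      (snd x = snd y \<and> (fst y = fst x + 1 \<or> fst x = fst y + 1)))"

end

theory Submission
  imports Defs
begin

definition md :: "nat \<times> nat \<Rightarrow> nat \<times> nat \<Rightarrow> nat" where
  "md u v = nat (\<bar>int (fst u) - int (fst v)\<bar> + \<bar>int (snd u) - int (snd v)\<bar>)"

lemma md_tri: "md u v \<le> md u w + md w v"
  unfolding md_def by arith

lemma md_zero: "md u v = 0 \<longleftrightarrow> u = v"
  unfolding md_def by (cases u; cases v) auto

lemma adj_md: "grid_adj a b x y \<Longrightarrow> md x y = 1"
  unfolding grid_adj_def md_def by auto

lemma adj_in: "grid_adj a b x y \<Longrightarrow> x \<in> grid_vertices a b \<and> y \<in> grid_vertices a b"
  unfolding grid_adj_def by auto

lemma pow_lower: "(grid_adj a b ^^ n) u v \<Longrightarrow> md u v \<le> n"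
proof (induction n arbitrary: v)
  case 0
  then show ?case by (simp add: md_zero)
next
  case (Suc n)
  then obtain w where "(grid_adj a b ^^ n) u w" "grid_adj a b w v" by (auto elim: relpowp_Suc_E)
  then show ?case using Suc.IH md_tri[of u v w] adj_md by fastforce
qed

lemma step_exists:
  assumes "u \<in> grid_vertices a b" "v \<in> grid_vertices a b" "md u v = Suc k"
  shows "\<exists>w. grid_adj a b u w \<and> md w v = k"
proof -
  obtain i j where u: "u = (i,j)" by (cases u)
  obtain k' l where v: "v = (k',l)" by (cases v)
  have bd: "i < a" "j < b" "k' < a" "l < b" using assms u v by (auto simp: grid_vertices_def)
  show ?thesis
  proof (cases "i < k'")
    case True
    then show ?thesis using bd assms(3) u v
      by (intro exI[of _ "(i+1,j)"]) (auto simp: grid_adj_def grid_vertices_def md_def)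
  next
    case f1: False
    show ?thesis
    proof (cases "k' < i")
      case True
      then show ?thesis using bd assms(3) u v
        by (intro exI[of _ "(i-1,j)"]) (auto simp: grid_adj_def grid_vertices_def md_def)
    next
      case f2: False
      show ?thesis
      proof (cases "j < l")
        case True
        then show ?thesis using bd assms(3) u v f1 f2
          by (intro exI[of _ "(i,j+1)"]) (auto simp: grid_adj_def grid_vertices_def md_def)
      next
        case False
        then show ?thesis using bd assms(3) u v f1 f2
          by (intro exI[of _ "(i,j-1)"]) (auto simp: grid_adj_def grid_vertices_def md_def)
      qed
    qed
  qed
qed

lemma pow_upper: "u \<in> grid_vertices a b \<Longrightarrow> v \<in> grid_vertices a b \<Longrightarrow> md u v = k
   \<Longrightarrow> (grid_adj a b ^^ k) u v"
proof (induction k arbitrary: u)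
  case 0
  then show ?case by (simp add: md_zero)
next
  case (Suc k)
  then obtain w where w: "grid_adj a b u w" "md w v = k" using step_exists by blast
  then have "w \<in> grid_vertices a b" using adj_in by blast
  then show ?case using Suc w by (blast intro: relpowp_Suc_I2)
qed

lemma gdist_md: "u \<in> grid_vertices a b \<Longrightarrow> v \<in> grid_vertices a b
   \<Longrightarrow> gdist (grid_adj a b) u v = md u v"
  unfolding gdist_def
  by (rule Least_equality) (auto intro: pow_upper dest: pow_lower)

definition pot :: "(nat \<times> nat) set \<Rightarrow> nat \<times> nat \<Rightarrow> (nat \<times> nat \<Rightarrow> nat) \<Rightarrow> real" where
  "pot V v D = (\<Sum>w\<in>V. real (D w) * (1/2) ^ md w v)"

lemma finite_grid: "finite (grid_vertices a b)"
  unfolding grid_vertices_def by simp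

lemma move_pot:
  assumes mv: "pebble_move (grid_adj a b) D x y D'"
  shows "pot (grid_vertices a b) v D' \<le> pot (grid_vertices a b) v D"
proof -
  let ?V = "grid_vertices a b"
  let ?f = "\<lambda>w. ((1::real)/2) ^ md w v"
  have adj: "grid_adj a b x y" and d2: "D x \<ge> 2"
    and D': "D' = (\<lambda>w. if w = x then D x - 2 else if w = y then D y + 1 else D w)"
    using mv unfolding pebble_move_def by auto
  have xy: "x \<in> ?V" "y \<in> ?V" using adj_in[OF adj] by auto
  have "x \<noteq> y" using adj_md[OF adj] md_zero[of x x] by auto
  have eq: "\<And>w. real (D' w) * ?f w = real (D w) * ?f w - (if w = x then 2 * ?f x else 0)
        + (if w = y then ?f y else 0)"
  proof -
    fix w
    show "?thesis w"
    proof (cases "w = x")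
      case True
      then show ?thesis using \<open>x \<noteq> y\<close> d2 by (simp add: D' of_nat_diff algebra_simps)
    next
      case False
      then show ?thesis by (cases "w = y") (simp_all add: D' algebra_simps)
    qed
  qed
  have "pot ?V v D' = pot ?V v D - 2 * ?f x + ?f y"
    unfolding pot_def eq
    using xy by (simp add: sum.distrib sum_subtractf finite_grid sum.delta)
  moreover have "?f y \<le> 2 * ?f x"
  proof -
    have "md x v \<le> md y v + 1" using md_tri[of x v y] adj_md[OF adj] by simp
    then have "((1::real)/2) ^ (md y v + 1) \<le> (1/2) ^ md x v"
      by (intro power_decreasing) auto
    then show ?thesis by simp
  qed
  ultimately show ?thesis by simp
qed

lemma steps_pot:
  assumes "(pebble_step (grid_adj a b))\<^sup>*\<^sup>* D D1"
  shows "pot (grid_vertices a b) v D1 \<le> pot (grid_vertices a b) v D"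
  using assms
proof (induction rule: rtranclp_induct)
  case base
  then show ?case by simp
next
  case (step y z)
  then show ?case using move_pot unfolding pebble_step_def by (meson order_trans)
qed

lemma pot_ge_point:
  assumes "v \<in> grid_vertices a b"
  shows "real (D v) \<le> pot (grid_vertices a b) v D"
proof -
  have "real (D v) * (1/2) ^ md v v \<le> pot (grid_vertices a b) v D"
    unfolding pot_def by (rule member_le_sum) (auto simp: assms finite_grid)
  moreover have "md v v = 0" by (simp add: md_zero)
  ultimately show ?thesis by simp
qed

lemma reach_pot:
  assumes "v \<in> grid_vertices a b" "reachable (grid_adj a b) D v"
  shows "pot (grid_vertices a b) v D \<ge> 1"
proof -
  consider "D v \<ge> 1" | D1 D2 w where "(pebble_step (grid_adj a b))\<^sup>*\<^sup>* D D1"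
      "pebble_move (grid_adj a b) D1 w v D2"
    using assms(2) unfolding reachable_def by blast
  then show ?thesis
  proof cases
    case 1
    then show ?thesis using pot_ge_point[OF assms(1), of D] by linarith
  next
    case 2
    have "grid_adj a b w v" using 2(2) unfolding pebble_move_def by auto
    then have "w \<noteq> v" using adj_md md_zero[of w w] by fastforce
    then have "D2 v \<ge> 1" using 2(2) unfolding pebble_move_def by auto
    then have "1 \<le> pot (grid_vertices a b) v D2" using pot_ge_point[OF assms(1), of D2] by linarith
    also have "\<dots> \<le> pot (grid_vertices a b) v D1" using move_pot[OF 2(2)] .
    also have "\<dots> \<le> pot (grid_vertices a b) v D" using steps_pot[OF 2(1)] .
    finally show ?thesis .
  qed
qed

lemma ceil_num:
  assumes "finite V"
  shows "(\<Sum>v\<in>V. weight V E D v) - (\<Sum>v\<in>V. excess_weight V E D v)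
     = real (card {v\<in>V. weight V E D v > 1})"
proof -
  have "(\<Sum>v\<in>V. weight V E D v) - (\<Sum>v\<in>V. excess_weight V E D v)
      = (\<Sum>v\<in>V. if weight V E D v > 1 then 1 else 0)"
    unfolding sum_subtractf[symmetric] excess_weight_def by (rule sum.cong) auto
  also have "\<dots> = (\<Sum>v\<in>{v\<in>V. weight V E D v > 1}. 1)"
    using sum.inter_filter[OF assms, of "\<lambda>_. (1::real)"] by simp
  finally show ?thesis by simp
qed


lemma grid35: "grid_vertices 3 5 = set [(i,j). i \<leftarrow> [0..<3], j \<leftarrow> [0..<5]]"
  unfolding grid_vertices_def by auto

lemma card_S1: "card {v \<in> grid_vertices 3 5. md v (1,2) \<le> 1} = 5"
  unfolding grid35 set_filter[symmetric]
  by (simp add: md_def upt_rec)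

lemma card_S2: "card {v \<in> grid_vertices 3 5. md v (1,2) \<le> 2} = 11"
  unfolding grid35 set_filter[symmetric]
  by (simp add: md_def upt_rec)


lemma md_sym: "md u v = md v u"
  unfolding md_def by arith

definition Dk :: "nat \<Rightarrow> nat \<times> nat \<Rightarrow> nat" where
  "Dk k = (\<lambda>v. if v = (1,2) then k else 0)"

lemma c_in: "(1,2) \<in> grid_vertices 3 5"
  unfolding grid_vertices_def by auto

lemma size_k: "dist_size (grid_vertices 3 5) (Dk k) = k"
  unfolding dist_size_def Dk_def using c_in by (simp add: finite_grid)

lemma weight_k:
  assumes "u \<in> grid_vertices 3 5"
  shows "weight (grid_vertices 3 5) (grid_adj 3 5) (Dk k) u = real k * (1/2) ^ md u (1,2)"
proof -
  have "weight (grid_vertices 3 5) (grid_adj 3 5) (Dk k) u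
     = (\<Sum>v\<in>grid_vertices 3 5. if v = (1,2) then real k * (1/2) ^ gdist (grid_adj 3 5) u (1,2) else 0)"
    unfolding weight_def Dk_def by (rule sum.cong) auto
  also have "\<dots> = real k * (1/2) ^ gdist (grid_adj 3 5) u (1,2)"
    using c_in by (simp add: finite_grid)
  finally show ?thesis using gdist_md[OF assms c_in] by simp
qed

lemma pot_k: "pot (grid_vertices 3 5) v (Dk k) = real k * (1/2) ^ md v (1,2)"
proof -
  have "pot (grid_vertices 3 5) v (Dk k)
     = (\<Sum>w\<in>grid_vertices 3 5. if w = (1,2) then real k * (1/2) ^ md (1,2) v else 0)"
    unfolding pot_def Dk_def by (rule sum.cong) auto
  also have "\<dots> = real k * (1/2) ^ md (1,2) v"
    using c_in by (simp add: finite_grid)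
  finally show ?thesis by (simp add: md_sym)
qed

lemma pow_half_cases: "m \<ge> 2 \<Longrightarrow> ((1::real)/2) ^ m \<le> 1/4"
proof -
  assume "m \<ge> 2"
  then have "((1::real)/2) ^ m \<le> (1/2) ^ 2" by (intro power_decreasing) auto
  then show ?thesis by (simp add: power2_eq_square)
qed

lemma gt1_iff: "(k::real) \<in> {3,4} \<Longrightarrow> k * (1/2) ^ m > 1 \<longleftrightarrow> m \<le> 1"
proof -
  assume k: "k \<in> {3,4}"
  consider "m = 0" | "m = 1" | "m \<ge> 2" by linarith
  then show ?thesis
  proof cases
    case 3
    then have "k * (1/2) ^ m \<le> k * (1/4)"
      using pow_half_cases k by (intro mult_left_mono) auto
    then show ?thesis using k 3 by auto
  qed (use k in auto)
qed

lemma ge1_3: "3 * ((1::real)/2) ^ m \<ge> 1 \<Longrightarrow> m \<le> 1"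
proof (rule ccontr)
  assume a: "3 * ((1::real)/2) ^ m \<ge> 1" "\<not> m \<le> 1"
  then have "3 * ((1::real)/2) ^ m \<le> 3 * (1/4)"
    using pow_half_cases by (intro mult_left_mono) auto
  then show False using a by simp
qed

lemma wset:
  assumes "k \<in> {3,4}"
  shows "{v \<in> grid_vertices 3 5. weight (grid_vertices 3 5) (grid_adj 3 5) (Dk k) v > 1}
       = {v \<in> grid_vertices 3 5. md v (1,2) \<le> 1}"
proof -
  have "real k \<in> {3,4}" using assms by auto
  then show ?thesis using weight_k gt1_iff by auto
qed

lemma ceil_k:
  assumes "k \<in> {3,4}"
  shows "covering_ratio_ceiling (grid_vertices 3 5) (grid_adj 3 5) (Dk k) = 5 / real k"
  unfolding covering_ratio_ceiling_def ceil_num[OF finite_grid] wset[OF assms] card_S1 size_k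
  by simp

lemma reach3:
  "{v \<in> grid_vertices 3 5. reachable (grid_adj 3 5) (Dk 3) v}
     \<subseteq> {v \<in> grid_vertices 3 5. md v (1,2) \<le> 1}"
proof clarify
  fix i j assume v: "(i,j) \<in> grid_vertices 3 5" "reachable (grid_adj 3 5) (Dk 3) (i,j)"
  have "1 \<le> pot (grid_vertices 3 5) (i,j) (Dk 3)" using reach_pot[OF v] .
  then have "3 * ((1::real)/2) ^ md (i,j) (1,2) \<ge> 1" by (simp add: pot_k)
  then show "md (i,j) (1,2) \<le> 1" by (rule ge1_3)
qed

lemma reach4:
  "{v \<in> grid_vertices 3 5. md v (1,2) \<le> 2}
     \<subseteq> {v \<in> grid_vertices 3 5. reachable (grid_adj 3 5) (Dk 4) v}"
proof clarify
  fix i j assume v: "(i,j) \<in> grid_vertices 3 5" "md (i,j) (1,2) \<le> 2"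
  let ?v = "(i,j)" and ?c = "(1::nat,2::nat)" and ?E = "grid_adj 3 5" and ?D = "Dk 4"
  have pw: "(?E ^^ md ?c ?v) ?c ?v" using pow_upper[OF c_in v(1)] by simp
  have Dc: "?D ?c = 4" by (simp add: Dk_def)
  have "md ?c ?v \<le> 2" using v(2) md_sym[of ?c ?v] by simp
  then consider "md ?c ?v = 0" | "md ?c ?v = 1" | "md ?c ?v = 2" by linarith
  then show "reachable ?E ?D ?v"
  proof cases
    case 1
    then have "?v = ?c" using md_zero[of ?c ?v] by simp
    then have "?D ?v \<ge> 1" using Dc by simp
    then show ?thesis unfolding reachable_def by (rule disjI1)
  next
    case 2
    have e: "?E ?c ?v" using pw unfolding 2 relpowp_1 .
    define A where "A = (\<lambda>z. if z = ?c then ?D ?c - 2 else if z = ?v then ?D ?v + 1 else ?D z)"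
    have "2 \<le> ?D ?c" using Dc by simp
    then have "pebble_move ?E ?D ?c ?v A" unfolding pebble_move_def A_def using e by blast
    then show ?thesis unfolding reachable_def using rtranclp.rtrancl_refl by blast
  next
    case 3
    have "(?E ^^ Suc 1) ?c ?v" using pw 3 by (simp only: Suc_1)
    then obtain w where e1: "?E ?c w" and e2: "(?E ^^ 1) w ?v"
      by (rule relpowp_Suc_E2)
    have e2': "?E w ?v" using e2 unfolding relpowp_1 .
    have wc: "w \<noteq> ?c" using adj_md[OF e1] md_zero[of w w] by auto
    have Dw: "?D w = 0" using wc by (simp add: Dk_def)
    define A where "A = (\<lambda>z. if z = ?c then ?D ?c - 2 else if z = w then ?D w + 1 else ?D z)"
    have "2 \<le> ?D ?c" using Dc by simp
    then have m1: "pebble_move ?E ?D ?c w A" unfolding pebble_move_def A_def using e1 by blast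
    have Ac: "A ?c = 2" unfolding A_def using Dc by simp
    have Aw: "A w = 1" unfolding A_def using Dw wc by simp
    define B where "B = (\<lambda>z. if z = ?c then A ?c - 2 else if z = w then A w + 1 else A z)"
    have "2 \<le> A ?c" using Ac by simp
    then have m2: "pebble_move ?E A ?c w B" unfolding pebble_move_def B_def using e1 by blast
    have Bw: "B w = 2" unfolding B_def using Aw wc by simp
    define F where "F = (\<lambda>z. if z = w then B w - 2 else if z = ?v then B ?v + 1 else B z)"
    have "2 \<le> B w" using Bw by simp
    then have m3: "pebble_move ?E B w ?v F" unfolding pebble_move_def F_def using e2' by blast
    have s1: "pebble_step ?E ?D A" using m1 unfolding pebble_step_def by blast
    have s2: "pebble_step ?E A B" using m2 unfolding pebble_step_def by blast
    have "(pebble_step ?E)\<^sup>*\<^sup>* ?D B"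
      using s1 s2 by (meson rtranclp.rtrancl_refl rtranclp.rtrancl_into_rtrancl)
    then show ?thesis unfolding reachable_def using m3 by blast
  qed
qed

theorem mainTheorem3:
  shows "\<exists>(a::nat) (b::nat) (D::nat \<times> nat \<Rightarrow> nat) (D'::nat \<times> nat \<Rightarrow> nat).
     a \<ge> 1 \<and> b \<ge> 1 \<and>
     (\<forall>v. v \<notin> grid_vertices a b \<longrightarrow> D v = 0 \<and> D' v = 0) \<and>
     dist_size (grid_vertices a b) D > 0 \<and>
     (\<forall>v. D v \<le> D' v) \<and>
     covering_ratio (grid_vertices a b) (grid_adj a b) D' >
       covering_ratio (grid_vertices a b) (grid_adj a b) D + 1 \<and>
     covering_ratio_ceiling (grid_vertices a b) (grid_adj a b) D' <
       covering_ratio_ceiling (grid_vertices a b) (grid_adj a b) D"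
proof (rule exI[of _ "3::nat"], rule exI[of _ "5::nat"], rule exI[of _ "Dk 3"], rule exI[of _ "Dk 4"], intro conjI)
  let ?V = "grid_vertices 3 5" and ?E = "grid_adj 3 5"
  show "(1::nat) \<le> 3" "(1::nat) \<le> 5" by auto
  show "\<forall>v. v \<notin> ?V \<longrightarrow> Dk 3 v = 0 \<and> Dk 4 v = 0" using c_in by (auto simp: Dk_def)
  show "dist_size ?V (Dk 3) > 0" by (simp add: size_k)
  show "\<forall>v. Dk 3 v \<le> Dk 4 v" by (simp add: Dk_def)
  have c3: "card {v \<in> ?V. reachable ?E (Dk 3) v} \<le> 5"
    using card_mono[OF _ reach3] card_S1 finite_grid by simp
  have c4: "card {v \<in> ?V. reachable ?E (Dk 4) v} \<ge> 11"
    using card_mono[OF _ reach4] card_S2 finite_grid by simp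
  have r3: "covering_ratio ?V ?E (Dk 3) \<le> 5/3"
    unfolding covering_ratio_def size_k using c3 by simp
  have r4: "covering_ratio ?V ?E (Dk 4) \<ge> 11/4"
    unfolding covering_ratio_def size_k using c4 by simp
  show "covering_ratio ?V ?E (Dk 4) > covering_ratio ?V ?E (Dk 3) + 1"
    using r3 r4 by linarith
  show "covering_ratio_ceiling ?V ?E (Dk 4) < covering_ratio_ceiling ?V ?E (Dk 3)"
    using ceil_k[of 3] ceil_k[of 4] by simp
qed

end
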